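(* Let $G$ be a graph, let $Q\subset B\subset G$ and $x\in B$. Let $\xi$ be a random walk started at $x$ and stopped upon exiting $B$ (identified with its trace). Then for every positive integer $t$, $$\Pr[\xi\cap Q\neq\emptyset]\ge \Pr[B\subset A_t(x\mapsto B)]\cdot\frac{|Q|}{t}.$$
   Context: $G$ is a connected locally finite graph and "random walk" means simple random walk on $G$. IDLA with pausing: for finite $S\subset G$, $y\in G$, $T\subset G$, let $\zeta$ be a random walk started at $y$, $t_S$ the first time $\zeta\notin S$, $t_T$ the first time $\zeta\notin T$, and $A(S;y\mapsto T)=S\cup\{\zeta(t_S\wedge(t_T-1))\}$. For $y_1,\dots,y_k$ define inductively (independent walks) $S_0=S$, $S_j=A(S_{j-1};y_j\mapsto T)$, $A(S;y_1,\dots,y_k\mapsto T)=S_k$. Then $A_t(x\mapsto B)=A(\emptyset;x,\dots,x\mapsto B)$ with $t$ copies of $x$. *)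

theory Defs
  imports "HOL-Probability.Probability"
begin

definition nbrs :: "('a \<Rightarrow> 'a \<Rightarrow> bool) \<Rightarrow> 'a \<Rightarrow> 'a set" where
  "nbrs E v = {w. E v w}"

text \<open>Distribution of the first n steps of simple random walk started at x:
  the list [zeta(0), ..., zeta(n)].\<close>
fun walk_pmf :: "('a \<Rightarrow> 'a \<Rightarrow> bool) \<Rightarrow> 'a \<Rightarrow> nat \<Rightarrow> 'a list pmf" where
  "walk_pmf E x 0 = return_pmf [x]"
| "walk_pmf E x (Suc n) =
     bind_pmf (walk_pmf E x n) (\<lambda>p. map_pmf (\<lambda>y. p @ [y]) (pmf_of_set (nbrs E (last p))))"

text \<open>Probability that the walk started at x, stopped upon exiting B, visits Q.
  Defined as the (monotone) limit of the probabilities of visiting Q before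
  exiting B within the first n steps.\<close>
definition hit_prob :: "('a \<Rightarrow> 'a \<Rightarrow> bool) \<Rightarrow> 'a \<Rightarrow> 'a set \<Rightarrow> 'a set \<Rightarrow> real" where
  "hit_prob E x B Q = (SUP n. measure_pmf.prob (walk_pmf E x n)
      {p. \<exists>k<length p. p ! k \<in> Q \<and> (\<forall>j<k. p ! j \<in> B)})"

definition first_exit :: "'a set \<Rightarrow> 'a list \<Rightarrow> nat option" where
  "first_exit S p = (if \<exists>k<length p. p ! k \<notin> S
      then Some (LEAST k. k < length p \<and> p ! k \<notin> S) else None)"

text \<open>The point zeta(t_S min (t_T - 1)), if it is determined by the path prefix p.\<close>
definition stop_point :: "'a set \<Rightarrow> 'a set \<Rightarrow> 'a list \<Rightarrow> 'a option" where
  "stop_point S T p = (case (first_exit S p, first_exit T p) of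
       (Some a, Some b) \<Rightarrow> Some (p ! min a (b - 1))
     | (Some a, None) \<Rightarrow> Some (p ! a)
     | (None, Some b) \<Rightarrow> Some (p ! (b - 1))
     | (None, None) \<Rightarrow> None)"

text \<open>One step A(S; y |-> T) of IDLA with pausing, using only the first n steps of
  the walk; None means the walk has not stopped within n steps.\<close>
definition aggr_step :: "('a \<Rightarrow> 'a \<Rightarrow> bool) \<Rightarrow> nat \<Rightarrow> 'a set \<Rightarrow> 'a \<Rightarrow> 'a set \<Rightarrow> 'a set option pmf" where
  "aggr_step E n S y T = map_pmf (\<lambda>p. map_option (\<lambda>z. insert z S) (stop_point S T p)) (walk_pmf E y n)"

text \<open>A_t(x |-> T) with every walk truncated at n steps (None = some walk did not stop).\<close>
definition idla_trunc :: "('a \<Rightarrow> 'a \<Rightarrow> bool) \<Rightarrow> nat \<Rightarrow> nat \<Rightarrow> 'a \<Rightarrow> 'a set \<Rightarrow> 'a set option pmf" where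
  "idla_trunc E n t x T = ((\<lambda>M. bind_pmf M (\<lambda>r. case r of None \<Rightarrow> return_pmf None
                                           | Some S \<Rightarrow> aggr_step E n S x T)) ^^ t)
                        (return_pmf (Some {}))"

text \<open>Pr[B \<subseteq> A_t(x |-> T)], as the monotone limit of the truncated probabilities.\<close>
definition idla_cover_prob :: "('a \<Rightarrow> 'a \<Rightarrow> bool) \<Rightarrow> nat \<Rightarrow> 'a \<Rightarrow> 'a set \<Rightarrow> 'a set \<Rightarrow> real" where
  "idla_cover_prob E t x T B = (SUP n. measure_pmf.prob (idla_trunc E n t x T)
      {r. \<exists>S. r = Some S \<and> B \<subseteq> S})"

end

theory Submission
  imports Defs
begin

lemma walk_start:
  "p \<in> set_pmf (walk_pmf E x n) \<Longrightarrow> p \<noteq> [] \<and> p ! 0 = x"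
proof (induction n arbitrary: p)
  case 0
  then show ?case by simp
next
  case (Suc n)
  then obtain q y where "q \<in> set_pmf (walk_pmf E x n)" "p = q @ [y]"
    by auto
  with Suc.IH[of q] show ?case by (simp add: nth_append)
qed

lemma stop_hit:
  assumes "p \<noteq> []" "p ! 0 \<in> B" "stop_point S B p = Some z" "z \<in> Q"
  shows "\<exists>k<length p. p ! k \<in> Q \<and> (\<forall>j<k. p ! j \<in> B)"
proof -
  have exB: "\<And>b. first_exit B p = Some b \<Longrightarrow> b < length p \<and> p ! b \<notin> B \<and> (\<forall>j<b. p ! j \<in> B) \<and> b \<ge> 1"
  proof -
    fix b assume h: "first_exit B p = Some b"
    then have ex: "\<exists>k<length p. p ! k \<notin> B" and bd: "b = (LEAST k. k < length p \<and> p ! k \<notin> B)"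
      by (auto simp: first_exit_def split: if_splits)
    from LeastI_ex[OF ex[unfolded Bex_def[symmetric]]] ex
    have 1: "b < length p \<and> p ! b \<notin> B"
      using bd by (metis (mono_tags, lifting) LeastI_ex)
    have 2: "\<forall>j<b. p ! j \<in> B"
      using bd 1 not_less_Least by (metis (mono_tags, lifting) order.strict_trans)
    have "b \<noteq> 0" using 1 assms(2) by (metis)
    with 1 2 show "b < length p \<and> p ! b \<notin> B \<and> (\<forall>j<b. p ! j \<in> B) \<and> b \<ge> 1" by simp
  qed
  have exS: "\<And>a. first_exit S p = Some a \<Longrightarrow> a < length p"
  proof -
    fix a assume h: "first_exit S p = Some a"
    then have ex: "\<exists>k<length p. p ! k \<notin> S" and bd: "a = (LEAST k. k < length p \<and> p ! k \<notin> S)"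
      by (auto simp: first_exit_def split: if_splits)
    then show "a < length p" by (metis (mono_tags, lifting) LeastI_ex)
  qed
  have noB: "first_exit B p = None \<Longrightarrow> \<forall>j<length p. p ! j \<in> B"
    by (auto simp: first_exit_def split: if_splits)
  show ?thesis
  proof (cases "first_exit S p")
    case None
    show ?thesis
    proof (cases "first_exit B p")
      case None
      then show ?thesis using \<open>first_exit S p = None\<close> assms(3) by (simp add: stop_point_def)
    next
      case (Some b)
      with \<open>first_exit S p = None\<close> assms(3) have z: "z = p ! (b - 1)" by (simp add: stop_point_def)
      from exB[OF Some] show ?thesis using z assms(4)
        by (intro exI[of _ "b - 1"]) auto
    qed
  next
    case (Some a)
    note aS = Some
    show ?thesis
    proof (cases "first_exit B p")
      case None
      with aS assms(3) have z: "z = p ! a" by (simp add: stop_point_def)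
      show ?thesis using z assms(4) exS[OF aS] noB[OF None]
        by (intro exI[of _ a]) auto
    next
      case (Some b)
      with aS assms(3) have z: "z = p ! min a (b - 1)" by (simp add: stop_point_def)
      from exB[OF Some] exS[OF aS] show ?thesis using z assms(4)
        by (intro exI[of _ "min a (b - 1)"]) auto
    qed
  qed
qed

definition fQ :: "'a set \<Rightarrow> 'a set option \<Rightarrow> ennreal" where
  "fQ Q r = (case r of None \<Rightarrow> 0 | Some S \<Rightarrow> of_nat (card (Q \<inter> S)))"

lemma step_bound:
  assumes finQ: "finite Q" and xB: "x \<in> B"
  defines "H \<equiv> {p. \<exists>k<length p. p ! k \<in> Q \<and> (\<forall>j<k. p ! j \<in> B)}"
  shows "(\<integral>\<^sup>+ p. fQ Q (map_option (\<lambda>z. insert z S) (stop_point S B p)) \<partial>walk_pmf E x n)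
         \<le> of_nat (card (Q \<inter> S)) + emeasure (walk_pmf E x n) H"
proof -
  have "(\<integral>\<^sup>+ p. fQ Q (map_option (\<lambda>z. insert z S) (stop_point S B p)) \<partial>walk_pmf E x n)
      \<le> (\<integral>\<^sup>+ p. (of_nat (card (Q \<inter> S)) + indicator H p) \<partial>walk_pmf E x n)"
  proof (rule nn_integral_mono_AE, rule AE_pmfI)
    fix p assume p: "p \<in> set_pmf (walk_pmf E x n)"
    from walk_start[OF p] xB have p0: "p \<noteq> []" "p ! 0 \<in> B" by auto
    show "fQ Q (map_option (\<lambda>z. insert z S) (stop_point S B p))
          \<le> of_nat (card (Q \<inter> S)) + indicator H p"
    proof (cases "stop_point S B p")
      case None
      then show ?thesis by (simp add: fQ_def)
    next
      case (Some z)
      show ?thesis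
      proof (cases "z \<in> Q")
        case True
        then have "p \<in> H" using stop_hit[OF p0 Some True] by (simp add: H_def)
        have "card (Q \<inter> insert z S) \<le> card (Q \<inter> S) + 1"
          using finQ by (metis Int_insert_right card_insert_le_m1 diff_add_inverse2
              finite_Int card_insert_if le_refl add.commute plus_1_eq_Suc le_SucI)
        then have "of_nat (card (Q \<inter> insert z S)) \<le> (of_nat (card (Q \<inter> S)) + 1 :: ennreal)"
          by (metis of_nat_Suc of_nat_le_iff add.commute plus_1_eq_Suc)
        then show ?thesis using Some \<open>p \<in> H\<close> by (simp add: fQ_def)
      next
        case False
        then show ?thesis using Some by (simp add: fQ_def)
      qed
    qed
  qed
  also have "\<dots> = of_nat (card (Q \<inter> S)) + emeasure (walk_pmf E x n) H"
    by (subst nn_integral_add) (auto simp: emeasure_pmf)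
  finally show ?thesis .
qed


lemma idla_bound:
  assumes finQ: "finite Q" and xB: "x \<in> B"
  defines "H \<equiv> {p. \<exists>k<length p. p ! k \<in> Q \<and> (\<forall>j<k. p ! j \<in> B)}"
  shows "(\<integral>\<^sup>+ r. fQ Q r \<partial>idla_trunc E n t x B) \<le> of_nat t * emeasure (walk_pmf E x n) H"
proof (induction t)
  case 0
  then show ?case by (simp add: idla_trunc_def fQ_def)
next
  case (Suc t)
  let ?e = "emeasure (walk_pmf E x n) H"
  let ?g = "\<lambda>r. case r of None \<Rightarrow> return_pmf None | Some S \<Rightarrow> aggr_step E n S x B"
  have eq: "idla_trunc E n (Suc t) x B = bind_pmf (idla_trunc E n t x B) ?g"
    by (simp add: idla_trunc_def)
  have g: "(\<integral>\<^sup>+ y. fQ Q y \<partial>?g r) \<le> fQ Q r + ?e" for r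
  proof (cases r)
    case None
    then show ?thesis by (simp add: fQ_def)
  next
    case (Some S)
    then show ?thesis using step_bound[OF finQ xB, where S=S and E=E and n=n]
      by (simp add: aggr_step_def fQ_def H_def)
  qed
  have "(\<integral>\<^sup>+ r. fQ Q r \<partial>idla_trunc E n (Suc t) x B)
      = (\<integral>\<^sup>+ r. \<integral>\<^sup>+ y. fQ Q y \<partial>?g r \<partial>idla_trunc E n t x B)"
    unfolding eq by simp
  also have "\<dots> \<le> (\<integral>\<^sup>+ r. (fQ Q r + ?e) \<partial>idla_trunc E n t x B)"
    by (rule nn_integral_mono) (rule g)
  also have "\<dots> = (\<integral>\<^sup>+ r. fQ Q r \<partial>idla_trunc E n t x B) + ?e"
    by (subst nn_integral_add) (auto simp: emeasure_pmf)
  also have "\<dots> \<le> of_nat t * ?e + ?e"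
    using Suc.IH by (simp add: add_right_mono)
  also have "\<dots> = of_nat (Suc t) * ?e"
    by (simp add: distrib_right add.commute)
  finally show ?case .
qed

lemma cover_bound:
  assumes finQ: "finite Q" and QB: "Q \<subseteq> B" and xB: "x \<in> B"
  defines "H \<equiv> {p. \<exists>k<length p. p ! k \<in> Q \<and> (\<forall>j<k. p ! j \<in> B)}"
  shows "measure_pmf.prob (idla_trunc E n t x B) {r. \<exists>S. r = Some S \<and> B \<subseteq> S} * real (card Q)
     \<le> real t * measure_pmf.prob (walk_pmf E x n) H"
proof -
  let ?M = "idla_trunc E n t x B" and ?C = "{r. \<exists>S. r = Some S \<and> B \<subseteq> S}"
  have "ennreal (real (card Q)) * emeasure ?M ?C = (\<integral>\<^sup>+ r. ennreal (real (card Q)) * indicator ?C r \<partial>?M)"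
    by (simp add: nn_integral_cmult_indicator)
  also have "\<dots> \<le> (\<integral>\<^sup>+ r. fQ Q r \<partial>?M)"
  proof (rule nn_integral_mono)
    fix r show "ennreal (real (card Q)) * indicator ?C r \<le> fQ Q r"
    proof (cases "r \<in> ?C")
      case True
      then obtain S where "r = Some S" "B \<subseteq> S" by auto
      then have "Q \<inter> S = Q" using QB by auto
      then show ?thesis using True \<open>r = Some S\<close> by (simp add: fQ_def)
    qed simp
  qed
  also have "\<dots> \<le> of_nat t * emeasure (walk_pmf E x n) H"
    using idla_bound[OF finQ xB] by (simp add: H_def)
  finally have "ennreal (real (card Q) * measure ?M ?C) \<le> ennreal (real t * measure (walk_pmf E x n) H)"
    by (simp add: measure_pmf.emeasure_eq_measure ennreal_mult ennreal_of_nat_eq_real_of_nat)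
  then show ?thesis
    by (subst (asm) ennreal_le_iff) (auto simp: mult.commute)
qed

theorem lemma3p1:
  fixes E :: "'a \<Rightarrow> 'a \<Rightarrow> bool" and Q B :: "'a set" and x :: 'a and t :: nat
  assumes sym: "\<And>u v. E u v \<Longrightarrow> E v u"
    and irrefl: "\<And>v. \<not> E v v"
    and locfin: "\<And>v. finite (nbrs E v)"
    and nonisolated: "\<And>v. nbrs E v \<noteq> {}"
    and connected: "\<And>u v. E\<^sup>*\<^sup>* u v"
    and QB: "Q \<subseteq> B" and xB: "x \<in> B" and tpos: "t > 0"
  shows "hit_prob E x B Q \<ge> idla_cover_prob E t x B B * (real (card Q) / real t)"
proof -
  define H where "H = {p. \<exists>k<length p. p ! k \<in> Q \<and> (\<forall>j<k. p ! j \<in> B)}"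
  let ?h = "\<lambda>n. measure_pmf.prob (walk_pmf E x n) H"
  let ?c = "\<lambda>n. measure_pmf.prob (idla_trunc E n t x B) {r. \<exists>S. r = Some S \<and> B \<subseteq> S}"
  have hdef: "hit_prob E x B Q = (SUP n. ?h n)" by (simp add: hit_prob_def H_def)
  have cdef: "idla_cover_prob E t x B B = (SUP n. ?c n)" by (simp add: idla_cover_prob_def)
  have bdd: "bdd_above (range ?h)"
    by (rule bdd_aboveI[of _ 1]) auto
  have hle: "?h n \<le> hit_prob E x B Q" for n
    unfolding hdef by (rule cSUP_upper[OF _ bdd]) simp
  have hnn: "0 \<le> hit_prob E x B Q" using hle[of 0] measure_nonneg[of _ H] by (meson order.trans)
  show ?thesis
  proof (cases "finite Q \<and> card Q > 0")
    case False
    then have "card Q = 0" by auto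
    then show ?thesis using hnn by simp
  next
    case True
    then have fin: "finite Q" and cp: "real (card Q) > 0" by auto
    have "?c n \<le> real t * hit_prob E x B Q / real (card Q)" for n
    proof -
      have "?c n * real (card Q) \<le> real t * ?h n"
        using cover_bound[OF fin QB xB, of E n t] by (simp add: H_def)
      also have "\<dots> \<le> real t * hit_prob E x B Q"
        by (rule mult_left_mono[OF hle]) simp
      finally show ?thesis using cp by (simp add: pos_le_divide_eq)
    qed
    then have "idla_cover_prob E t x B B \<le> real t * hit_prob E x B Q / real (card Q)"
      unfolding cdef by (intro cSUP_least) auto
    then show ?thesis using cp tpos
      by (simp add: pos_le_divide_eq field_simps)
  qed
qed

end
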